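(* Fix $\beta\in[0,1)$. For each $n$, let $l=l_n$ be an integer with $\liminf_{n\to\infty} l_n/n>\beta$, let $G_0$ be an $n\times l$ binary matrix whose entries are i.i.d. uniform on $\{0,1\}$, and let $G_1$ be any $n\times k$ binary matrix and $\mathbf m\in\{0,1\}^k$ any message. Consider the defect model and linear-equation encoding described in the context. Then the probability of encoding failure $P(E=0)$ (over the random choice of $G_0$ and the random defect pattern) tends to $0$ as $n\to\infty$. In particular, rates $k/n=1-l/n$ arbitrarily close to $C_{\mathrm{BDC}}=1-\beta$ are achievable on the binary defect channel using encoding by solving the linear equation $G_0^{\mathcal U}\mathbf d=\mathbf b^{\mathcal U}$.
   Context: All arithmetic is over $\mathrm{GF}(2)$. Defect model: each of the $n$ memory cells is independently defective with probability $\beta$; a defective cell is stuck at $0$ or at $1$, each with probability $1/2$, independently. Let $\mathcal U\subseteq\{1,\dots,n\}$ be the set of defect positions, $U=|\mathcal U|$, and $\mathbf s^{\mathcal U}\in\{0,1\}^{U}$ the vector of stuck-at values. For a matrix $M$ (resp. vector $\mathbf v$) with rows indexed by $\{1,\dots,n\}$, $M^{\mathcal U}$ (resp. $\mathbf v^{\mathcal U}$) denotes the submatrix (resp. subvector) of rows indexed by $\mathcal U$. Encoding: set $\mathbf b=G_1\mathbf m+\mathbf s$ on $\mathcal U$, i.e. $\mathbf b^{\mathcal U}=(G_1\mathbf m)^{\mathcal U}+\mathbf s^{\mathcal U}$, and look for $\mathbf d\in\{0,1\}^l$ with $G_0^{\mathcal U}\mathbf d=\mathbf b^{\mathcal U}$;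 then the codeword $\mathbf c=G_1\mathbf m+G_0\mathbf d$ agrees with the stuck-at value at every defect position. $E=1$ (encoding success) if such $\mathbf d$ exists, and $E=0$ (encoding failure) otherwise. *)

theory Defs
  imports "HOL-Probability.Probability" "HOL-Library.Z2"
begin

text \<open>Binary matrices/vectors are functions on indices (0-based) with entries in GF(2) = bit.
  An n x l matrix is M :: nat => nat => bit with rows i < n and columns j < l.\<close>

definition mat_vec :: "nat \<Rightarrow> (nat \<Rightarrow> nat \<Rightarrow> bit) \<Rightarrow> (nat \<Rightarrow> bit) \<Rightarrow> nat \<Rightarrow> bit" where
  "mat_vec cols M v = (\<lambda>i. \<Sum>j<cols. M i j * v j)"

definition random_matrix :: "nat \<Rightarrow> nat \<Rightarrow> (nat \<Rightarrow> nat \<Rightarrow> bit) pmf" where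
  "random_matrix n l = Pi_pmf {0..<n} (\<lambda>_. 0) (\<lambda>_. Pi_pmf {0..<l} 0 (\<lambda>_. pmf_of_set UNIV))"

text \<open>State of one cell: None = not defective; Some s = defective, stuck at s.
  Defective w.p. beta, stuck value uniform.\<close>
definition cell_pmf :: "real \<Rightarrow> bit option pmf" where
  "cell_pmf \<beta> = do { dfct \<leftarrow> bernoulli_pmf \<beta>;
      if dfct then map_pmf Some (pmf_of_set UNIV) else return_pmf None }"

definition defect_pmf :: "real \<Rightarrow> nat \<Rightarrow> (nat \<Rightarrow> bit option) pmf" where
  "defect_pmf \<beta> n = Pi_pmf {0..<n} None (\<lambda>_. cell_pmf \<beta>)"

text \<open>Encoding success (E = 1): with c = G1 m and b^U = c^U + s^U, there is d in GF(2)^l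
  with G0^U d = b^U.\<close>
definition encoding_success ::
  "nat \<Rightarrow> nat \<Rightarrow> (nat \<Rightarrow> nat \<Rightarrow> bit) \<Rightarrow> (nat \<Rightarrow> bit) \<Rightarrow> (nat \<Rightarrow> bit option) \<Rightarrow> bool" where
  "encoding_success n l G0 c D =
     (\<exists>d :: nat \<Rightarrow> bit. \<forall>i<n. \<forall>s. D i = Some s \<longrightarrow> mat_vec l G0 d i = c i + s)"

definition failure_prob ::
  "real \<Rightarrow> nat \<Rightarrow> nat \<Rightarrow> nat \<Rightarrow> (nat \<Rightarrow> nat \<Rightarrow> bit) \<Rightarrow> (nat \<Rightarrow> bit) \<Rightarrow> real" where
  "failure_prob \<beta> n l k G1 m =
     measure_pmf.prob (pair_pmf (random_matrix n l) (defect_pmf \<beta> n))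
       {(G0, D). \<not> encoding_success n l G0 (mat_vec k G1 m) D}"

end

theory Submission
  imports Defs
begin

declare add_bit_eq_xor[simp del] mult_bit_eq_and[simp del]
lemma bit_add_self[simp]: "(x::bit) + x = 0" by (cases x) simp_all
lemma bit_UNIV: "(UNIV::bit set) = {0,1}" by auto
lemma bit_card: "card (UNIV::bit set) = 2" by (simp add: bit_UNIV)
lemma bit_add_self2: "(x::bit) + y + y = x" by (cases x; cases y) simp_all

lemma fredholm:
  fixes A :: "nat \<Rightarrow> nat \<Rightarrow> bit"
  assumes "finite U"
  shows "(\<forall>b. \<exists>d. \<forall>i\<in>U. (\<Sum>j<l. A i j * d j) = b i) \<or>
         (\<exists>y. (\<exists>i\<in>U. y i \<noteq> 0) \<and> (\<forall>j<l. (\<Sum>i\<in>U. y i * A i j) = 0))"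
  using assms
proof (induction l arbitrary: U A)
  case 0
  show ?case
  proof (cases "U = {}")
    case True then show ?thesis by auto
  next
    case False
    then obtain i where "i \<in> U" by auto
    then show ?thesis by (intro disjI2 exI[of _ "\<lambda>_. 1"]) auto
  qed
next
  case (Suc l)
  define a where "a i = A i l" for i
  show ?case
  proof (cases "\<forall>i\<in>U. a i = 0")
    case True
    from Suc.IH[OF Suc.prems, of A] show ?thesis
    proof
      assume L: "\<forall>b. \<exists>d. \<forall>i\<in>U. (\<Sum>j<l. A i j * d j) = b i"
      show ?thesis
      proof (intro disjI1 allI)
        fix b
        obtain d where d: "\<forall>i\<in>U. (\<Sum>j<l. A i j * d j) = b i" using L by blast
        show "\<exists>d. \<forall>i\<in>U. (\<Sum>j<Suc l. A i j * d j) = b i"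
          using d True by (intro exI[of _ d]) (auto simp: a_def)
      qed
    next
      assume R: "\<exists>y. (\<exists>i\<in>U. y i \<noteq> 0) \<and> (\<forall>j<l. (\<Sum>i\<in>U. y i * A i j) = 0)"
      then obtain y where y: "\<exists>i\<in>U. y i \<noteq> 0" "\<forall>j<l. (\<Sum>i\<in>U. y i * A i j) = 0" by blast
      have "\<forall>j<Suc l. (\<Sum>i\<in>U. y i * A i j) = 0"
      proof (intro allI impI)
        fix j assume "j < Suc l"
        then consider "j < l" | "j = l" by linarith
        then show "(\<Sum>i\<in>U. y i * A i j) = 0"
          by cases (use y True in \<open>auto simp: a_def\<close>)
      qed
      with y show ?thesis by blast
    qed
  next
    case False
    then obtain p where p: "p \<in> U" "a p = 1" by auto
    define A' where "A' i j = A i j + a i * A p j" for i j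
    have AA': "A i j = A' i j + a i * A p j" for i j
      by (simp only: A'_def bit_add_self2)
    have fin: "finite (U - {p})" using Suc.prems by simp
    have Usplit: "\<And>f. sum f U = f p + sum f (U - {p})"
      using Suc.prems p(1) by (simp add: sum.remove)
    from Suc.IH[OF fin, of A'] show ?thesis
    proof
      assume L: "\<forall>b. \<exists>d. \<forall>i\<in>U - {p}. (\<Sum>j<l. A' i j * d j) = b i"
      show ?thesis
      proof (intro disjI1 allI)
        fix b
        define b' where "b' i = b i + a i * b p" for i
        obtain d' where d': "\<forall>i\<in>U - {p}. (\<Sum>j<l. A' i j * d' j) = b' i" using L by blast
        define P where "P = (\<Sum>j<l. A p j * d' j)"
        define d where "d = d'(l := b p + P)"
        have sd: "(\<Sum>j<Suc l. A i j * d j) = (\<Sum>j<l. A i j * d' j) + a i * (b p + P)" for i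
          by (simp add: d_def a_def)
        have "(\<Sum>j<Suc l. A i j * d j) = b i" if "i \<in> U" for i
        proof (cases "i = p")
          case True
          have e1: "(\<Sum>j<Suc l. A p j * d j) = P + 1 * (b p + P)"
            using sd[of p] p(2) unfolding P_def by (simp only:)
          have e2: "P + 1 * (b p + P) = b p" by (cases P; cases "b p") simp_all
          show ?thesis using e1 e2 True by simp
        next
          case False
          have "(\<Sum>j<l. A i j * d' j) = (\<Sum>j<l. A' i j * d' j) + a i * P"
            unfolding AA'[of i] P_def by (simp add: algebra_simps sum.distrib sum_distrib_left)
          also have "\<dots> = b' i + a i * P" using d' that False by auto
          finally have S: "(\<Sum>j<l. A i j * d' j) = b i + a i * b p + a i * P"
            by (simp add: b'_def)
          show ?thesis unfolding sd S
            by (cases "b i"; cases "a i"; cases "b p"; cases P) simp_all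
        qed
        then show "\<exists>d. \<forall>i\<in>U. (\<Sum>j<Suc l. A i j * d j) = b i" by blast
      qed
    next
      assume R: "\<exists>y. (\<exists>i\<in>U - {p}. y i \<noteq> 0) \<and> (\<forall>j<l. (\<Sum>i\<in>U - {p}. y i * A' i j) = 0)"
      then obtain y' where y': "\<exists>i\<in>U - {p}. y' i \<noteq> 0" "\<forall>j<l. (\<Sum>i\<in>U - {p}. y' i * A' i j) = 0"
        by blast
      define Y where "Y = (\<Sum>i\<in>U - {p}. y' i * a i)"
      define y where "y = y'(p := Y)"
      have s1: "(\<Sum>i\<in>U - {p}. y i * f i) = (\<Sum>i\<in>U - {p}. y' i * f i)" for f
        by (rule sum.cong) (auto simp: y_def)
      have "\<forall>j<Suc l. (\<Sum>i\<in>U. y i * A i j) = 0"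
      proof (intro allI impI)
        fix j assume "j < Suc l"
        then consider "j < l" | "j = l" by linarith
        then show "(\<Sum>i\<in>U. y i * A i j) = 0"
        proof cases
          case 1
          have "(\<Sum>i\<in>U - {p}. y' i * A i j) = (\<Sum>i\<in>U - {p}. y' i * A' i j) + Y * A p j"
          proof -
            have "(\<Sum>i\<in>U - {p}. y' i * A i j) = (\<Sum>i\<in>U - {p}. y' i * (A' i j + a i * A p j))"
              by (rule sum.cong[OF refl], subst AA', rule refl)
            also have "\<dots> = (\<Sum>i\<in>U - {p}. y' i * A' i j) + (\<Sum>i\<in>U - {p}. y' i * a i) * A p j"
              by (simp add: distrib_left sum.distrib sum_distrib_right mult.assoc)
            finally show ?thesis unfolding Y_def .
          qed
          then have "(\<Sum>i\<in>U - {p}. y' i * A i j) = Y * A p j" using y' 1 by simp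
          then show ?thesis by (simp add: Usplit s1 y_def)
        next
          case 2
          then show ?thesis using p by (simp add: Usplit s1 y_def Y_def a_def)
        qed
      qed
      moreover have "\<exists>i\<in>U. y i \<noteq> 0" using y' by (auto simp: y_def)
      ultimately show ?thesis by blast
    qed
  qed
qed

lemma prob_pair_le:
  fixes p :: "'a pmf" and q :: "'b pmf"
  assumes h: "\<And>y. y \<in> set_pmf q \<Longrightarrow> measure_pmf.prob p {x. (x,y) \<in> E} \<le> h y"
    and int: "integrable q h" and nn: "\<And>y. 0 \<le> h y"
  shows "measure_pmf.prob (pair_pmf p q) E \<le> measure_pmf.expectation q h"
proof -
  let ?E' = "(\<lambda>(x,y). (y,x)) -` E"
  have "emeasure (pair_pmf p q) E = emeasure (pair_pmf q p) ?E'"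
    by (subst pair_commute_pmf) simp
  also have "\<dots> = (\<integral>\<^sup>+z. indicator ?E' z \<partial>pair_pmf q p)"
    by (rule nn_integral_indicator[symmetric]) simp
  also have "\<dots> = (\<integral>\<^sup>+b. \<integral>\<^sup>+a. indicator ?E' (b,a) \<partial>p \<partial>q)"
    by (rule nn_integral_pair_pmf')
  also have "\<dots> = (\<integral>\<^sup>+b. emeasure p {a. (a,b) \<in> E} \<partial>q)"
  proof (intro nn_integral_cong)
    fix b
    have "(\<integral>\<^sup>+a. indicator ?E' (b,a) \<partial>p) = (\<integral>\<^sup>+a. indicator {a. (a,b) \<in> E} a \<partial>p)"
      by (intro nn_integral_cong) (simp split: split_indicator)
    also have "\<dots> = emeasure p {a. (a,b) \<in> E}"
      by (rule nn_integral_indicator) simp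
    finally show "(\<integral>\<^sup>+a. indicator ?E' (b,a) \<partial>p) = emeasure p {a. (a,b) \<in> E}" .
  qed
  also have "\<dots> \<le> (\<integral>\<^sup>+b. ennreal (h b) \<partial>q)"
    by (intro nn_integral_mono_AE AE_pmfI)
       (simp add: measure_pmf.emeasure_eq_measure h ennreal_leI)
  also have "\<dots> = ennreal (measure_pmf.expectation q h)"
    by (rule nn_integral_eq_integral) (use int nn in auto)
  finally have "ennreal (measure_pmf.prob (pair_pmf p q) E) \<le> ennreal (measure_pmf.expectation q h)"
    by (simp add: measure_pmf.emeasure_eq_measure)
  moreover have "0 \<le> measure_pmf.expectation q h" by (simp add: nn)
  ultimately show ?thesis by (simp add: ennreal_le_iff)
qed


lemma bit_finite[simp]: "finite (UNIV::bit set)" by (simp add: bit_UNIV)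

lemma prob_uniform_single: "measure_pmf.prob (pmf_of_set (UNIV::bit set)) {x} = 1/2"
  by (subst measure_pmf_of_set) (auto simp: bit_card)

lemma dep_prob:
  assumes S: "S \<subseteq> {0..<n}" "S \<noteq> {}"
  shows "measure_pmf.prob (random_matrix n l) {M. \<forall>j<l. (\<Sum>i\<in>S. M i j) = 0} \<le> (1/2)^l"
proof -
  obtain i0 where i0: "i0 \<in> S" using S by auto
  define A where "A = {0..<n} - {i0}"
  define R where "R = (Pi_pmf {0..<l} 0 (\<lambda>_. pmf_of_set UNIV) :: (nat \<Rightarrow> bit) pmf)"
  have ins: "{0..<n} = insert i0 A" "finite A" "i0 \<notin> A" using i0 S by (auto simp: A_def)
  have rm: "random_matrix n l = map_pmf (\<lambda>(y,f). f(i0:=y)) (pair_pmf R (Pi_pmf A (\<lambda>_. 0) (\<lambda>_. R)))"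
    unfolding random_matrix_def R_def ins(1) by (rule Pi_pmf_insert[OF ins(2,3)])
  define E where "E = {M. \<forall>j<l. (\<Sum>i\<in>S. M i j) = (0::bit)}"
  have "measure_pmf.prob (random_matrix n l) E =
        measure_pmf.prob (pair_pmf R (Pi_pmf A (\<lambda>_. 0) (\<lambda>_. R))) ((\<lambda>(y,f). f(i0:=y)) -` E)"
    by (simp add: rm)
  also have "\<dots> \<le> measure_pmf.expectation (Pi_pmf A (\<lambda>_. 0) (\<lambda>_. R)) (\<lambda>_. (1/2)^l)"
  proof (rule prob_pair_le)
    fix f :: "nat \<Rightarrow> nat \<Rightarrow> bit"
    define g where "g j = (\<Sum>i\<in>S - {i0}. f i j)" for j
    have sumeq: "(\<Sum>i\<in>S. (f(i0:=y)) i j) = y j + g j" for y j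
    proof -
      have "(\<Sum>i\<in>S. (f(i0:=y)) i j) = (f(i0:=y)) i0 j + (\<Sum>i\<in>S - {i0}. (f(i0:=y)) i j)"
        using i0 S finite_subset[OF S(1)] by (simp add: sum.remove)
      also have "(\<Sum>i\<in>S - {i0}. (f(i0:=y)) i j) = g j"
        unfolding g_def by (rule sum.cong) auto
      finally show ?thesis by simp
    qed
    have "{y. (y, f) \<in> (\<lambda>(y,f). f(i0:=y)) -` E} \<subseteq> Pi {0..<l} (\<lambda>j. {g j})"
    proof
      fix y assume "y \<in> {y. (y, f) \<in> (\<lambda>(y,f). f(i0:=y)) -` E}"
      then have "\<forall>j<l. (\<Sum>i\<in>S. (f(i0:=y)) i j) = 0" by (simp add: E_def del: fun_upd_apply)
      then have "\<forall>j<l. y j + g j = 0" by (simp only: sumeq)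
      then have "\<forall>j<l. y j = g j" by (metis bit_add_self2 add_0)
      then show "y \<in> Pi {0..<l} (\<lambda>j. {g j})" by auto
    qed
    then have "measure_pmf.prob R {y. (y, f) \<in> (\<lambda>(y,f). f(i0:=y)) -` E}
          \<le> measure_pmf.prob R (Pi {0..<l} (\<lambda>j. {g j}))"
      by (intro measure_pmf.finite_measure_mono) auto
    also have "\<dots> = (\<Prod>j\<in>{0..<l}. measure_pmf.prob (pmf_of_set UNIV) {g j})"
      unfolding R_def by (rule measure_Pi_pmf_Pi) simp
    also have "\<dots> = (1/2)^l" by (simp add: prob_uniform_single)
    finally show "measure_pmf.prob R {y. (y, f) \<in> (\<lambda>(y,f). f(i0:=y)) -` E} \<le> (1/2)^l" .
  qed auto
  also have "\<dots> = (1/2)^l" by simp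
  finally show ?thesis unfolding E_def .
qed


lemma fail_given_D:
  "measure_pmf.prob (random_matrix n l) {G0. \<not> encoding_success n l G0 c D}
     \<le> 2 ^ card {i\<in>{0..<n}. D i \<noteq> None} * (1/2)^l"
proof -
  define U where "U = {i\<in>{0..<n}. D i \<noteq> None}"
  have finU: "finite U" by (simp add: U_def)
  define E where "E S = {M. \<forall>j<l. (\<Sum>i\<in>S. M i j) = (0::bit)}" for S :: "nat set"
  have sub: "{G0. \<not> encoding_success n l G0 c D} \<subseteq> (\<Union>S\<in>Pow U - {{}}. E S)"
  proof
    fix G0 assume G0: "G0 \<in> {G0. \<not> encoding_success n l G0 c D}"
    from fredholm[OF finU, where A=G0 and l=l] show "G0 \<in> (\<Union>S\<in>Pow U - {{}}. E S)"
    proof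
      assume L: "\<forall>b. \<exists>d. \<forall>i\<in>U. (\<Sum>j<l. G0 i j * d j) = b i"
      then obtain d where d: "\<forall>i\<in>U. (\<Sum>j<l. G0 i j * d j) = c i + the (D i)"
        using spec[OF L, of "\<lambda>i. c i + the (D i)"] by blast
      have "encoding_success n l G0 c D"
        unfolding encoding_success_def
      proof (intro exI[of _ d] allI impI)
        fix i s assume "i < n" "D i = Some s"
        then have "i \<in> U" by (simp add: U_def)
        then show "mat_vec l G0 d i = c i + s" using d \<open>D i = Some s\<close> by (simp add: mat_vec_def)
      qed
      with G0 show ?thesis by simp
    next
      assume "\<exists>y. (\<exists>i\<in>U. y i \<noteq> 0) \<and> (\<forall>j<l. (\<Sum>i\<in>U. y i * G0 i j) = 0)"
      then obtain y where y: "\<exists>i\<in>U. y i \<noteq> 0" "\<forall>j<l. (\<Sum>i\<in>U. y i * G0 i j) = 0" by blast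
      define S where "S = {i\<in>U. y i \<noteq> 0}"
      have "S \<in> Pow U - {{}}" using y(1) by (auto simp: S_def)
      moreover have "G0 \<in> E S"
        unfolding E_def
      proof (intro CollectI allI impI)
        fix j assume "j < l"
        have "(\<Sum>i\<in>U. y i * G0 i j) = (\<Sum>i\<in>S. y i * G0 i j)"
        proof (rule sum.mono_neutral_right[OF finU])
          show "S \<subseteq> U" by (auto simp: S_def)
          show "\<forall>i\<in>U - S. y i * G0 i j = 0"
          proof
            fix i assume "i \<in> U - S"
            then have "y i = 0" unfolding S_def by blast
            then show "y i * G0 i j = 0" by simp
          qed
        qed
        also have "\<dots> = (\<Sum>i\<in>S. G0 i j)"
        proof (rule sum.cong[OF refl])
          fix x assume "x \<in> S"
          then have "y x = 1" unfolding S_def by simp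
          then show "y x * G0 x j = G0 x j" by simp
        qed
        finally show "(\<Sum>i\<in>S. G0 i j) = 0" using y(2) \<open>j < l\<close> by simp
      qed
      ultimately show ?thesis by blast
    qed
  qed
  have "measure_pmf.prob (random_matrix n l) {G0. \<not> encoding_success n l G0 c D}
        \<le> measure_pmf.prob (random_matrix n l) (\<Union>S\<in>Pow U - {{}}. E S)"
    by (intro measure_pmf.finite_measure_mono sub) simp
  also have "\<dots> \<le> (\<Sum>S\<in>Pow U - {{}}. measure_pmf.prob (random_matrix n l) (E S))"
    by (intro measure_pmf.finite_measure_subadditive_finite) (auto simp: finU)
  also have "\<dots> \<le> (\<Sum>S\<in>Pow U - {{}}. (1/2)^l)"
  proof (intro sum_mono)
    fix S assume "S \<in> Pow U - {{}}"
    then have "S \<subseteq> {0..<n}" "S \<noteq> {}" by (auto simp: U_def)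
    then show "measure_pmf.prob (random_matrix n l) (E S) \<le> (1/2)^l"
      unfolding E_def by (rule dep_prob)
  qed
  also have "\<dots> = real (card (Pow U - {{}})) * (1/2)^l" by simp
  also have "\<dots> \<le> 2 ^ card U * (1/2)^l"
  proof -
    have "card (Pow U - {{}}) \<le> card (Pow U)" by (intro card_mono) (auto simp: finU)
    then have "real (card (Pow U - {{}})) \<le> 2 ^ card U" by (simp add: card_Pow finU)
    then show ?thesis by (intro mult_right_mono) auto
  qed
  finally show ?thesis unfolding U_def .
qed


lemma cell_exp:
  assumes b: "0 \<le> \<beta>" "\<beta> \<le> 1" and r: "0 \<le> r"
  shows "measure_pmf.expectation (cell_pmf \<beta>) (\<lambda>x. if x = None then 1 else r) = 1 - \<beta> + \<beta> * r"
proof -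
  have "measure_pmf.expectation (cell_pmf \<beta>) (\<lambda>x. if x = None then 1 else r) =
     enn2real (\<integral>\<^sup>+x. ennreal (if x = None then 1 else r) \<partial>cell_pmf \<beta>)"
    by (rule integral_eq_nn_integral) (use r in auto)
  also have "(\<integral>\<^sup>+x. ennreal (if x = None then 1 else r) \<partial>cell_pmf \<beta>) = ennreal r * ennreal \<beta> + ennreal (1 - \<beta>)"
  proof -
    let ?g = "\<lambda>x. ennreal (if x = None then 1 else r)"
    have t: "(\<integral>\<^sup>+x. ?g x \<partial>map_pmf Some (pmf_of_set (UNIV::bit set))) = ennreal r"
      by (simp add: measure_pmf.emeasure_space_1)
    have f: "(\<integral>\<^sup>+x. ?g x \<partial>return_pmf None) = 1"
      by (simp add: nn_integral_return)
    have "(\<integral>\<^sup>+x. ?g x \<partial>cell_pmf \<beta>) = (\<integral>\<^sup>+d. (\<integral>\<^sup>+x. ?g x \<partial>(if d then map_pmf Some (pmf_of_set (UNIV::bit set)) else return_pmf None)) \<partial>bernoulli_pmf \<beta>)"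
      unfolding cell_pmf_def by (simp only: nn_integral_bind_pmf)
    also have "\<dots> = (\<integral>\<^sup>+d. (if d then ennreal r else 1) \<partial>bernoulli_pmf \<beta>)"
      by (intro nn_integral_cong, case_tac x) (simp_all only: if_True if_False t f)
    also have "\<dots> = ennreal r * ennreal \<beta> + 1 * ennreal (1 - \<beta>)"
      by (subst nn_integral_bernoulli_pmf) (use b in auto)
    finally show ?thesis by (simp only: mult_1)
  qed
  also have "\<dots> = ennreal (1 - \<beta> + \<beta> * r)"
  proof -
    have h1: "0 \<le> 1 - \<beta>" "0 \<le> \<beta> * r" using b r by auto
    show ?thesis by (simp only: ennreal_plus[OF h1] ennreal_mult[OF b(1) r] mult.commute add.commute)
  qed
  finally show ?thesis
  proof -
    have "0 \<le> 1 - \<beta> + \<beta> * r" using b r by auto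
    then show "measure_pmf.expectation (cell_pmf \<beta>) (\<lambda>x. if x = None then 1 else r) = enn2real (ennreal (1 - \<beta> + \<beta> * r)) \<Longrightarrow> ?thesis"
      by (simp only: enn2real_ennreal)
  qed
qed


lemma pow_card_prod:
  "(r::real) ^ card {i\<in>{0..<(n::nat)}. D i \<noteq> None} = (\<Prod>i\<in>{0..<n}. (if D i = None then 1 else r))"
proof -
  have "(\<Prod>i\<in>{0..<n}. (if D i = None then 1 else r)) = (\<Prod>i\<in>{0..<n}. (if D i \<noteq> None then r else 1))"
    by (rule prod.cong) auto
  also have "\<dots> = (\<Prod>i\<in>{i\<in>{0..<n}. D i \<noteq> None}. r)"
    by (rule prod.inter_filter[symmetric]) simp
  also have "\<dots> = r ^ card {i\<in>{0..<n}. D i \<noteq> None}" by simp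
  finally show ?thesis by simp
qed

lemma defect_exp:
  assumes b: "0 \<le> \<beta>" "\<beta> \<le> 1" and r: "0 \<le> r"
  shows "measure_pmf.expectation (defect_pmf \<beta> n) (\<lambda>D. r ^ card {i\<in>{0..<n}. D i \<noteq> None}) = (1 - \<beta> + \<beta> * r) ^ n"
proof -
  have fin: "finite (set_pmf (cell_pmf \<beta>))" by (rule finite_subset[OF subset_UNIV]) simp
  have "measure_pmf.expectation (defect_pmf \<beta> n) (\<lambda>D. r ^ card {i\<in>{0..<n}. D i \<noteq> None})
      = measure_pmf.expectation (defect_pmf \<beta> n) (\<lambda>D. \<Prod>i\<in>{0..<n}. (\<lambda>v. if v = None then 1 else r) (D i))"
    by (simp only: pow_card_prod)
  also have "\<dots> = (\<Prod>i\<in>{0..<n}. measure_pmf.expectation (cell_pmf \<beta>) (\<lambda>v. if v = None then 1 else r))"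
    unfolding defect_pmf_def
    by (rule expectation_prod_Pi_pmf) (auto intro!: integrable_measure_pmf_finite fin simp: r)
  also have "\<dots> = (1 - \<beta> + \<beta> * r) ^ n" by (simp add: cell_exp[OF b r])
  finally show ?thesis .
qed


lemma min_bound:
  fixes r :: real and u L :: nat
  assumes r: "1 < r" "r \<le> 2"
  shows "min 1 (2^u * (1/2)^L) \<le> r^u / r^L"
proof (cases "L \<le> u")
  case True
  then have "r^u = r^(u-L) * r^L" by (simp add: power_add[symmetric])
  then have "r^u / r^L = r^(u-L)" using r by simp
  moreover have "1 \<le> r^(u-L)" using r by (simp add: one_le_power)
  ultimately show ?thesis by simp
next
  case False
  then have eq: "L = u + (L - u)" by simp
  have "2^u * (1/2::real)^L = 1 / 2^(L-u)"
    by (subst eq) (simp add: power_add power_one_over)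
  also have "\<dots> \<le> 1 / r^(L-u)"
    using r by (intro divide_left_mono power_mono mult_pos_pos) auto
  also have "\<dots> = r^u / r^L"
    using r by (subst (2) eq) (simp add: power_add)
  finally show ?thesis by simp
qed

lemma fp_bound:
  assumes b: "0 \<le> \<beta>" "\<beta> \<le> 1" and r: "1 < r" "r \<le> 2"
  shows "failure_prob \<beta> n L K G m \<le> (1 - \<beta> + \<beta> * r)^n / r^L"
proof -
  define h where "h D = r ^ card {i\<in>{0..<n}. D i \<noteq> None} / r ^ L" for D :: "nat \<Rightarrow> bit option"
  have "failure_prob \<beta> n L K G m \<le> measure_pmf.expectation (defect_pmf \<beta> n) h"
    unfolding failure_prob_def
  proof (rule prob_pair_le)
    fix D :: "nat \<Rightarrow> bit option"
    let ?P = "measure_pmf.prob (random_matrix n L) {G0. \<not> encoding_success n L G0 (mat_vec K G m) D}"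
    have "?P \<le> min 1 (2 ^ card {i\<in>{0..<n}. D i \<noteq> None} * (1/2)^L)"
      using fail_given_D[of n L "mat_vec K G m" D] by (simp add: measure_pmf.prob_le_1)
    also have "\<dots> \<le> h D" unfolding h_def by (rule min_bound[OF r])
    finally show "measure_pmf.prob (random_matrix n L)
        {x. (x, D) \<in> {(G0, D). \<not> encoding_success n L G0 (mat_vec K G m) D}} \<le> h D" by simp
  next
    show "integrable (measure_pmf (defect_pmf \<beta> n)) h"
    proof (rule measure_pmf.integrable_const_bound[where B = "r^n / r^L"])
      show "AE x in measure_pmf (defect_pmf \<beta> n). norm (h x) \<le> r ^ n / r ^ L"
      proof (rule AE_pmfI)
        fix D :: "nat \<Rightarrow> bit option"
        have "card {i\<in>{0..<n}. D i \<noteq> None} \<le> card {0..<n}" by (intro card_mono) auto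
        then have "r ^ card {i\<in>{0..<n}. D i \<noteq> None} \<le> r ^ n" using r by (intro power_increasing) auto
        then show "norm (h D) \<le> r ^ n / r ^ L" using r unfolding h_def by (simp add: divide_right_mono)
      qed
    qed simp
  next
    fix D :: "nat \<Rightarrow> bit option" show "0 \<le> h D" using r by (simp add: h_def)
  qed
  also have "\<dots> = measure_pmf.expectation (defect_pmf \<beta> n) (\<lambda>D. r ^ card {i\<in>{0..<n}. D i \<noteq> None}) / r ^ L"
    unfolding h_def by simp
  also have "\<dots> = (1 - \<beta> + \<beta> * r)^n / r^L" using b r by (subst defect_exp) auto
  finally show ?thesis .
qed


lemma key_ineq:
  fixes \<beta> q r :: real
  assumes b: "0 \<le> \<beta>" "\<beta> < q" and r: "r = 2 * q / (\<beta> + q)"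
  shows "1 < r" "r \<le> 2" "1 - \<beta> + \<beta> * r < r powr q"
proof -
  have qp: "0 < q" "0 < \<beta> + q" using b by auto
  show r1: "1 < r" using b qp by (simp add: r field_simps)
  show "r \<le> 2" using b qp by (simp add: r field_simps)
  have rq: "\<beta> * r < q" using b qp by (simp add: r field_simps)
  have "ln (1/r) \<le> 1/r - 1" using r1 by (intro ln_le_minus_one) auto
  then have lnr: "1 - 1/r \<le> ln r" using r1 by (simp add: ln_div)
  have "1 + q * ln r \<le> exp (q * ln r)" by (rule exp_ge_add_one_self)
  also have "exp (q * ln r) = r powr q" using r1 by (simp add: powr_def)
  finally have A: "1 + q * ln r \<le> r powr q" .
  have "q * (1 - 1/r) \<le> q * ln r" using lnr qp by (intro mult_left_mono) auto
  moreover have "\<beta> * (r - 1) < q * (1 - 1/r)"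
  proof -
    have "0 < (q - \<beta> * r) * (r - 1)" using rq r1 by (intro mult_pos_pos) auto
    then have "\<beta> * (r - 1) * r < q * (r - 1)" by (simp add: algebra_simps)
    then have "\<beta> * (r - 1) < q * (r - 1) / r" using r1 by (simp add: field_simps)
    also have "q * (r - 1) / r = q * (1 - 1/r)" using r1 by (simp add: field_simps)
    finally show ?thesis .
  qed
  ultimately show "1 - \<beta> + \<beta> * r < r powr q" using A by (simp add: algebra_simps)
qed

theorem proposition3:
  fixes \<beta> :: real and l k :: "nat \<Rightarrow> nat"
    and G1 :: "nat \<Rightarrow> nat \<Rightarrow> nat \<Rightarrow> bit" and m :: "nat \<Rightarrow> nat \<Rightarrow> bit"
  assumes "0 \<le> \<beta>" and "\<beta> < 1"
    and "liminf (\<lambda>n. ereal (real (l n) / real n)) > ereal \<beta>"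
  shows "(\<lambda>n. failure_prob \<beta> n (l n) (k n) (G1 n) (m n)) \<longlonglongrightarrow> 0"
proof -
  obtain z where z: "ereal \<beta> < z" "z < liminf (\<lambda>n. ereal (real (l n) / real n))"
    using dense[OF assms(3)] by blast
  then obtain q where zq: "z = ereal q" by (cases z) auto
  have bq: "\<beta> < q" using z zq by simp
  have ev1: "eventually (\<lambda>n. ereal q < ereal (real (l n) / real n)) sequentially"
    using less_LiminfD[OF z(2)[unfolded zq]] by simp
  have ev: "eventually (\<lambda>n. q * real n \<le> real (l n)) sequentially"
    using ev1 eventually_gt_at_top[of 0]
  proof eventually_elim
    case (elim n)
    then have "q < real (l n) / real n" by simp
    then show ?case using elim(2) by (simp add: field_simps)
  qed
  define r where "r = 2 * q / (\<beta> + q)"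
  note ki = key_ineq[OF assms(1) bq r_def]
  define \<rho> where "\<rho> = (1 - \<beta> + \<beta> * r) / r powr q"
  have r0: "0 < r" using ki by simp
  have c0: "0 \<le> 1 - \<beta> + \<beta> * r" using assms(1,2) r0 by (simp add: add_nonneg_nonneg)
  have rho: "0 \<le> \<rho>" "\<rho> < 1" using ki c0 r0 by (auto simp: \<rho>_def)
  have bound: "eventually (\<lambda>n. failure_prob \<beta> n (l n) (k n) (G1 n) (m n) \<le> \<rho> ^ n) sequentially"
    using ev
  proof eventually_elim
    case (elim n)
    have "failure_prob \<beta> n (l n) (k n) (G1 n) (m n) \<le> (1 - \<beta> + \<beta> * r)^n / r^(l n)"
      using assms(1,2) ki by (intro fp_bound) auto
    also have "\<dots> \<le> (1 - \<beta> + \<beta> * r)^n / (r powr q)^n"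
    proof (rule divide_left_mono)
      have "(r powr q)^n = r powr (q * real n)"
        using r0 by (simp add: powr_powr[symmetric] powr_realpow)
      also have "\<dots> \<le> r powr (real (l n))" using elim ki by (intro powr_mono) auto
      also have "\<dots> = r ^ (l n)" using r0 by (simp add: powr_realpow)
      finally show "(r powr q)^n \<le> r ^ (l n)" .
      show "0 \<le> (1 - \<beta> + \<beta> * r)^n" using c0 by simp
      show "0 < r ^ l n * (r powr q) ^ n" using r0 by simp
    qed
    also have "\<dots> = \<rho> ^ n" by (simp add: \<rho>_def power_divide)
    finally show ?case .
  qed
  have lim: "(\<lambda>n. \<rho> ^ n) \<longlonglongrightarrow> 0" using rho by (intro LIMSEQ_power_zero) auto
  show ?thesis
  proof (rule tendsto_sandwich[OF _ bound tendsto_const lim])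
    show "eventually (\<lambda>n. 0 \<le> failure_prob \<beta> n (l n) (k n) (G1 n) (m n)) sequentially"
      by (simp add: failure_prob_def)
  qed
qed

end
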